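(* Let $\mathcal G$ be a core network with input nodes $\iota_1,\dots,\iota_n$ and output node $o$, and let $\rho_k>\rho_{k+1}$ be two adjacent absolutely super-simple nodes. Then $\mathcal L'_m(\rho_k,\rho_{k+1})=\mathcal L'(\rho_k,\rho_{k+1})$ for every $m=1,\dots,n$.
   Context: Node $b$ is downstream from $a$ (and $a$ upstream from $b$) if there is a directed path from $a$ to $b$. Core network: every node upstream from $o$ and downstream from at least one input. $\mathcal G_m$: nodes downstream from $\iota_m$ and upstream from $o$, with arrows of $\mathcal G$ between them. Simple path: visits each node at most once; $\iota_mo$-simple path: simple path from $\iota_m$ to $o$. A node is $\iota_m$-simple if on some $\iota_mo$-simple path, $\iota_m$-appendage if downstream from $\iota_m$ but not $\iota_m$-simple; absolutely simple/absolutely appendage if $\iota_m$-simple/$\iota_m$-appendage for all $m$. $\iota_m$-super-simple: $\iota_m$-simple and on every $\iota_mo$-simple path; they occur in the same order on all $\iota_mo$-simple paths and adjacent means consecutive. Absolutely super-simple: on every $\iota_mo$-simple path for every $m$; ordered $\rho_1>\cdots>\rho_p>o$ ($b$ after $a$ on every such path), adjacent = consecutive. For a subnetwork $\mathcal K$, $\mathcal K$-path equivalence means directed paths inside $\mathcal K$ both ways. For an $\iota_mo$-simple path $S$: $C_mS$ = nodes of $\mathcal G_m$ not on $S$ with arrows of $\mathcal G_m$ between them; $CS$ = nodes of $\mathcal G$ not on $S$ with arrows of $\mathcal G$ between them. $\mathcal L_m(\rho_k,\rho_{k+1})$: $\iota_m$-simple nodes $\rho$ such that some $\iota_mo$-simple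 path visits $\rho_k,\rho,\rho_{k+1}$ in that order (arrows of $\mathcal G_m$ among them). $\mathcal L(\rho_k,\rho_{k+1})$: absolutely simple nodes $\rho$ such that for some $m$ some $\iota_mo$-simple path visits $\rho_k,\rho,\rho_{k+1}$ in that order. $\mathcal L'_m(\rho_k,\rho_{k+1})$: nodes of $\mathcal L_m(\rho_k,\rho_{k+1})$ together with all $\iota_m$-appendage nodes that are $C_mS_m$-path equivalent to nodes of $\mathcal L_m(\rho_k,\rho_{k+1})$ for some $\iota_mo$-simple path $S_m$, with arrows of $\mathcal G_m$ among them. $\mathcal L'(\rho_k,\rho_{k+1})$ (absolutely super-simple structural subnetwork): nodes of $\mathcal L(\rho_k,\rho_{k+1})$ together with all absolutely appendage nodes that are $CS_m$-path equivalent to nodes in $\mathcal L(\rho_k,\rho_{k+1})$ for some $\iota_mo$-simple path $S_m$ and some $m$, with arrows of $\mathcal G$ among them. *)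

theory Defs
  imports Main
begin

definition is_path :: "('a \<times> 'a) set \<Rightarrow> 'a list \<Rightarrow> bool" where
  "is_path E xs \<longleftrightarrow> xs \<noteq> [] \<and> (\<forall>i. Suc i < length xs \<longrightarrow> (xs ! i, xs ! Suc i) \<in> E)"

definition downstream :: "('a \<times> 'a) set \<Rightarrow> 'a \<Rightarrow> 'a \<Rightarrow> bool" where
  "downstream E a b \<longleftrightarrow> (\<exists>xs. is_path E xs \<and> hd xs = a \<and> last xs = b)"

definition core_network ::
  "'a set \<Rightarrow> ('a \<times> 'a) set \<Rightarrow> (nat \<Rightarrow> 'a) \<Rightarrow> nat \<Rightarrow> 'a \<Rightarrow> bool" where
  "core_network V E inp n out \<longleftrightarrow>
     finite V \<and> E \<subseteq> V \<times> V \<and> n \<ge> 1 \<and> inp ` {1..n} \<subseteq> V \<and> out \<in> V \<and>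
     inj_on inp {1..n} \<and> out \<notin> inp ` {1..n} \<and>
     (\<forall>v\<in>V. downstream E v out \<and> (\<exists>m\<in>{1..n}. downstream E (inp m) v))"

definition io_simple_path :: "('a \<times> 'a) set \<Rightarrow> 'a \<Rightarrow> 'a \<Rightarrow> 'a list \<Rightarrow> bool" where
  "io_simple_path E i out S \<longleftrightarrow> is_path E S \<and> distinct S \<and> hd S = i \<and> last S = out"

definition simple_node :: "('a \<times> 'a) set \<Rightarrow> 'a \<Rightarrow> 'a \<Rightarrow> 'a \<Rightarrow> bool" where
  "simple_node E i out v \<longleftrightarrow> (\<exists>S. io_simple_path E i out S \<and> v \<in> set S)"

definition appendage_node :: "('a \<times> 'a) set \<Rightarrow> 'a \<Rightarrow> 'a \<Rightarrow> 'a \<Rightarrow> bool" where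
  "appendage_node E i out v \<longleftrightarrow> downstream E i v \<and> \<not> simple_node E i out v"

definition abs_simple :: "('a \<times> 'a) set \<Rightarrow> (nat \<Rightarrow> 'a) \<Rightarrow> nat \<Rightarrow> 'a \<Rightarrow> 'a \<Rightarrow> bool" where
  "abs_simple E inp n out v \<longleftrightarrow> (\<forall>m\<in>{1..n}. simple_node E (inp m) out v)"

definition abs_appendage :: "('a \<times> 'a) set \<Rightarrow> (nat \<Rightarrow> 'a) \<Rightarrow> nat \<Rightarrow> 'a \<Rightarrow> 'a \<Rightarrow> bool" where
  "abs_appendage E inp n out v \<longleftrightarrow> (\<forall>m\<in>{1..n}. appendage_node E (inp m) out v)"

definition abs_super_simple :: "('a \<times> 'a) set \<Rightarrow> (nat \<Rightarrow> 'a) \<Rightarrow> nat \<Rightarrow> 'a \<Rightarrow> 'a \<Rightarrow> bool" where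
  "abs_super_simple E inp n out v \<longleftrightarrow>
     (\<forall>m\<in>{1..n}. \<forall>S. io_simple_path E (inp m) out S \<longrightarrow> v \<in> set S)"

definition abs_before :: "('a \<times> 'a) set \<Rightarrow> (nat \<Rightarrow> 'a) \<Rightarrow> nat \<Rightarrow> 'a \<Rightarrow> 'a \<Rightarrow> 'a \<Rightarrow> bool" where
  "abs_before E inp n out a b \<longleftrightarrow>
     (\<forall>m\<in>{1..n}. \<forall>S. io_simple_path E (inp m) out S \<longrightarrow>
        (\<exists>i j. i < j \<and> j < length S \<and> S ! i = a \<and> S ! j = b))"

definition abs_adjacent :: "('a \<times> 'a) set \<Rightarrow> (nat \<Rightarrow> 'a) \<Rightarrow> nat \<Rightarrow> 'a \<Rightarrow> 'a \<Rightarrow> 'a \<Rightarrow> bool" where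
  "abs_adjacent E inp n out a b \<longleftrightarrow>
     abs_super_simple E inp n out a \<and> abs_super_simple E inp n out b \<and>
     abs_before E inp n out a b \<and>
     \<not> (\<exists>c. abs_super_simple E inp n out c \<and> abs_before E inp n out a c \<and>
             abs_before E inp n out c b)"

definition visits_in_order :: "'a list \<Rightarrow> 'a \<Rightarrow> 'a \<Rightarrow> 'a \<Rightarrow> bool" where
  "visits_in_order S a v c \<longleftrightarrow>
     (\<exists>i j k. i \<le> j \<and> j \<le> k \<and> k < length S \<and> S ! i = a \<and> S ! j = v \<and> S ! k = c)"

definition Gm_nodes :: "'a set \<Rightarrow> ('a \<times> 'a) set \<Rightarrow> 'a \<Rightarrow> 'a \<Rightarrow> 'a set" where
  "Gm_nodes V E i out = {v\<in>V. downstream E i v \<and> downstream E v out}"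

definition path_equiv :: "('a \<times> 'a) set \<Rightarrow> 'a set \<Rightarrow> 'a \<Rightarrow> 'a \<Rightarrow> bool" where
  "path_equiv E K a b \<longleftrightarrow> a \<in> K \<and> b \<in> K \<and>
     downstream (E \<inter> (K \<times> K)) a b \<and> downstream (E \<inter> (K \<times> K)) b a"

definition Lm :: "('a \<times> 'a) set \<Rightarrow> 'a \<Rightarrow> 'a \<Rightarrow> 'a \<Rightarrow> 'a \<Rightarrow> 'a set" where
  "Lm E i out a b = {v. simple_node E i out v \<and>
       (\<exists>S. io_simple_path E i out S \<and> visits_in_order S a v b)}"

definition Labs :: "('a \<times> 'a) set \<Rightarrow> (nat \<Rightarrow> 'a) \<Rightarrow> nat \<Rightarrow> 'a \<Rightarrow> 'a \<Rightarrow> 'a \<Rightarrow> 'a set" where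
  "Labs E inp n out a b = {v. abs_simple E inp n out v \<and>
       (\<exists>m\<in>{1..n}. \<exists>S. io_simple_path E (inp m) out S \<and> visits_in_order S a v b)}"

definition Lm' :: "'a set \<Rightarrow> ('a \<times> 'a) set \<Rightarrow> 'a \<Rightarrow> 'a \<Rightarrow> 'a \<Rightarrow> 'a \<Rightarrow> 'a set \<times> ('a \<times> 'a) set" where
  "Lm' V E i out a b =
    (let G = Gm_nodes V E i out;
         N = Lm E i out a b \<union>
             {v. appendage_node E i out v \<and>
                 (\<exists>S. io_simple_path E i out S \<and>
                      (\<exists>u\<in>Lm E i out a b. path_equiv (E \<inter> (G \<times> G)) (G - set S) v u))}
     in (N, {(x, y). (x, y) \<in> E \<and> x \<in> N \<and> y \<in> N \<and> x \<in> G \<and> y \<in> G}))"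

definition Labs' :: "'a set \<Rightarrow> ('a \<times> 'a) set \<Rightarrow> (nat \<Rightarrow> 'a) \<Rightarrow> nat \<Rightarrow> 'a \<Rightarrow> 'a \<Rightarrow> 'a \<Rightarrow> 'a set \<times> ('a \<times> 'a) set" where
  "Labs' V E inp n out a b =
    (let N = Labs E inp n out a b \<union>
             {v. abs_appendage E inp n out v \<and>
                 (\<exists>m\<in>{1..n}. \<exists>S. io_simple_path E (inp m) out S \<and>
                      (\<exists>u\<in>Labs E inp n out a b. path_equiv E (V - set S) v u))}
     in (N, {(x, y). (x, y) \<in> E \<and> x \<in> N \<and> y \<in> N}))"

end

theory Submission
  imports Defs
begin


lemma is_path_single[simp]: "is_path R [x]" by (simp add: is_path_def)
lemma is_path_Nil[simp]: "\<not> is_path R []" by (simp add: is_path_def)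

lemma is_path_Cons2: "is_path R (x#y#ys) \<longleftrightarrow> (x,y)\<in>R \<and> is_path R (y#ys)"
proof
  assume H: "is_path R (x#y#ys)"
  from H have h: "\<forall>i. Suc i < length (x#y#ys) \<longrightarrow> ((x#y#ys)!i, (x#y#ys)!Suc i) \<in> R"
    by (simp add: is_path_def)
  from h[rule_format, of 0] have "(x,y)\<in>R" by simp
  moreover have "is_path R (y#ys)" unfolding is_path_def
  proof (intro conjI allI impI)
    fix i assume "Suc i < length (y#ys)"
    then show "((y#ys)!i, (y#ys)!Suc i) \<in> R" using h[rule_format, of "Suc i"] by simp
  qed simp
  ultimately show "(x,y)\<in>R \<and> is_path R (y#ys)" by blast
next
  assume H: "(x,y)\<in>R \<and> is_path R (y#ys)"
  show "is_path R (x#y#ys)" unfolding is_path_def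
  proof (intro conjI allI impI)
    fix i assume "Suc i < length (x#y#ys)"
    then show "((x#y#ys)!i, (x#y#ys)!Suc i) \<in> R" using H
      by (cases i) (auto simp: is_path_def)
  qed simp
qed

lemma is_path_Cons: "ys \<noteq> [] \<Longrightarrow> is_path R (x#ys) \<longleftrightarrow> (x, hd ys) \<in> R \<and> is_path R ys"
  by (cases ys) (auto simp: is_path_Cons2)

lemma is_path_append: "is_path R xs \<Longrightarrow> is_path R ys \<Longrightarrow> (last xs, hd ys) \<in> R \<Longrightarrow> is_path R (xs @ ys)"
proof (induction xs)
  case Nil then show ?case by simp
next
  case (Cons x xs)
  have ys: "ys \<noteq> []" using Cons.prems by auto
  show ?case
  proof (cases "xs = []")
    case True then show ?thesis using Cons.prems ys by (simp add: is_path_Cons)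
  next
    case False
    then have "is_path R xs" "(x, hd xs) \<in> R" using Cons.prems by (auto simp: is_path_Cons)
    then have "is_path R (xs @ ys)" using Cons False by simp
    then show ?thesis using False \<open>(x, hd xs) \<in> R\<close> by (simp add: is_path_Cons)
  qed
qed

lemma is_path_drop: "is_path R S \<Longrightarrow> i < length S \<Longrightarrow> is_path R (drop i S)"
  unfolding is_path_def
proof (intro conjI allI impI)
  fix k assume H: "S \<noteq> [] \<and> (\<forall>i. Suc i < length S \<longrightarrow> (S ! i, S ! Suc i) \<in> R)" "i < length S"
    "Suc k < length (drop i S)"
  then have "Suc (i+k) < length S" by simp
  then have "(S!(i+k), S!Suc(i+k)) \<in> R" using H by blast
  then show "(drop i S ! k, drop i S ! Suc k) \<in> R" using H by simp
qed auto

lemma is_path_take: "is_path R S \<Longrightarrow> 0 < k \<Longrightarrow> is_path R (take k S)"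
  unfolding is_path_def by auto

lemma is_path_rtrancl: "is_path R xs \<Longrightarrow> (hd xs, last xs) \<in> R\<^sup>*"
proof (induction xs)
  case Nil then show ?case by simp
next
  case (Cons x xs)
  show ?case
  proof (cases "xs = []")
    case True then show ?thesis by simp
  next
    case False
    then have "is_path R xs" "(x, hd xs) \<in> R" using Cons.prems by (auto simp: is_path_Cons)
    then show ?thesis using Cons.IH False by (auto intro: converse_rtrancl_into_rtrancl)
  qed
qed

lemma rtrancl_is_path: "(x,y)\<in>R\<^sup>* \<Longrightarrow> \<exists>xs. is_path R xs \<and> hd xs = x \<and> last xs = y"
proof (induction rule: converse_rtrancl_induct)
  case base then show ?case by (intro exI[of _ "[y]"]) simp
next
  case (step x z)
  then obtain xs where "is_path R xs" "hd xs = z" "last xs = y" by blast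
  then show ?case using step by (intro exI[of _ "x#xs"]) (auto simp: is_path_Cons)
qed

lemma downstream_iff: "downstream R x y \<longleftrightarrow> (x,y) \<in> R\<^sup>*"
  unfolding downstream_def using is_path_rtrancl rtrancl_is_path by metis

definition reach :: "('a \<times> 'a) set \<Rightarrow> 'a set \<Rightarrow> 'a \<Rightarrow> 'a \<Rightarrow> bool" where
  "reach R K x y \<longleftrightarrow> x \<in> K \<and> (x,y) \<in> (R \<inter> K \<times> K)\<^sup>*"

lemma reach_refl: "x \<in> K \<Longrightarrow> reach R K x x" by (simp add: reach_def)

lemma reach_trans: "reach R K x y \<Longrightarrow> reach R K y z \<Longrightarrow> reach R K x z"
  unfolding reach_def by auto

lemma reach_mono: "reach R K x y \<Longrightarrow> K \<subseteq> K' \<Longrightarrow> reach R K' x y"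
  unfolding reach_def
proof (elim conjE, intro conjI)
  assume "(x, y) \<in> (R \<inter> K \<times> K)\<^sup>*" "K \<subseteq> K'"
  moreover have "R \<inter> K \<times> K \<subseteq> R \<inter> K' \<times> K'" using \<open>K \<subseteq> K'\<close> by blast
  ultimately show "(x, y) \<in> (R \<inter> K' \<times> K')\<^sup>*" using rtrancl_mono by blast
qed auto

lemma reach_tgt: "reach R K x y \<Longrightarrow> y \<in> K"
  unfolding reach_def
proof (elim conjE)
  assume "(x, y) \<in> (R \<inter> K \<times> K)\<^sup>*" "x \<in> K"
  then show "y \<in> K" by (induction rule: rtrancl_induct) auto
qed

lemma reach_src: "reach R K x y \<Longrightarrow> x \<in> K" by (simp add: reach_def)

lemma reach_edge: "(x,y) \<in> R \<Longrightarrow> x \<in> K \<Longrightarrow> y \<in> K \<Longrightarrow> reach R K x y"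
  unfolding reach_def by auto

lemma downstream_reach: "downstream R x y \<longleftrightarrow> reach R UNIV x y"
  by (simp add: downstream_iff reach_def)

lemma path_equiv_iff: "path_equiv R K v u \<longleftrightarrow> reach R K v u \<and> reach R K u v"
  unfolding path_equiv_def downstream_iff reach_def by auto

lemma reach_restrictG: "K \<subseteq> G \<Longrightarrow> reach (R \<inter> G \<times> G) K x y \<longleftrightarrow> reach R K x y"
proof -
  assume "K \<subseteq> G"
  then have "(R \<inter> G \<times> G) \<inter> K \<times> K = R \<inter> K \<times> K" by blast
  then show ?thesis by (simp add: reach_def)
qed

lemma reach_UNIV_V: "R \<subseteq> V \<times> V \<Longrightarrow> x \<in> V \<Longrightarrow> reach R UNIV x y \<Longrightarrow> reach R V x y"
proof -
  assume "R \<subseteq> V \<times> V" "x \<in> V" "reach R UNIV x y"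
  moreover have "R \<inter> UNIV \<times> UNIV = R \<inter> V \<times> V" using \<open>R \<subseteq> V \<times> V\<close> by blast
  ultimately show ?thesis by (simp add: reach_def)
qed

lemma dpath: "reach R K x y \<Longrightarrow> \<exists>S. is_path R S \<and> distinct S \<and> hd S = x \<and> last S = y \<and> set S \<subseteq> K"
  unfolding reach_def
proof (elim conjE)
  assume "(x, y) \<in> (R \<inter> K \<times> K)\<^sup>*" "x \<in> K"
  then show ?thesis
  proof (induction rule: converse_rtrancl_induct)
    case base then show ?case by (intro exI[of _ "[y]"]) simp
  next
    case (step x z)
    then obtain S where S: "is_path R S" "distinct S" "hd S = z" "last S = y" "set S \<subseteq> K" by auto
    show ?case
    proof (cases "x \<in> set S")
      case True
      then obtain i where i: "i < length S" "S!i = x" by (auto simp: in_set_conv_nth)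
      show ?thesis
        apply (intro exI[of _ "drop i S"])
        using S i by (auto simp: is_path_drop hd_drop_conv_nth dest: in_set_dropD)
    next
      case False
      then show ?thesis using S step by (intro exI[of _ "x#S"]) (auto simp: is_path_Cons)
    qed
  qed
qed

lemma seg: "is_path R S \<Longrightarrow> p \<le> q \<Longrightarrow> q < length S \<Longrightarrow> (\<forall>k. p \<le> k \<and> k \<le> q \<longrightarrow> S!k \<in> K)
  \<Longrightarrow> reach R K (S!p) (S!q)"
proof (induction q)
  case 0 then show ?case by (auto intro: reach_refl)
next
  case (Suc q)
  show ?case
  proof (cases "p = Suc q")
    case True then show ?thesis using Suc.prems by (auto intro: reach_refl)
  next
    case False
    then have "reach R K (S!p) (S!q)" using Suc by auto
    moreover have "(S!q, S!Suc q) \<in> R" using Suc.prems by (auto simp: is_path_def)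
    moreover have "S!q \<in> K" "S!Suc q \<in> K" using Suc.prems False by auto
    ultimately show ?thesis by (meson reach_edge reach_trans)
  qed
qed

lemma restrict: "reach R K x y \<Longrightarrow> reach R {w\<in>K. reach R K x w \<and> reach R K w y} x y"
proof -
  assume "reach R K x y"
  then obtain S where S: "is_path R S" "hd S = x" "last S = y" "set S \<subseteq> K" using dpath by metis
  have ne: "S \<noteq> []" using S by auto
  have x: "S!0 = x" using S ne by (simp add: hd_conv_nth)
  have y: "S!(length S - 1) = y" using S ne by (simp add: last_conv_nth)
  let ?K = "{w\<in>K. reach R K x w \<and> reach R K w y}"
  have "\<forall>k. 0 \<le> k \<and> k \<le> length S - 1 \<longrightarrow> S!k \<in> ?K"
  proof (intro allI impI)
    fix k assume k: "0 \<le> k \<and> k \<le> length S - 1"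
    then have kl: "k < length S" using ne by (cases S) auto
    have inK: "\<forall>k. k < length S \<longrightarrow> S!k \<in> K" using S by auto
    have "reach R K (S!0) (S!k)" using seg[OF S(1), of 0 k K] kl inK by auto
    moreover have "reach R K (S!k) (S!(length S - 1))" using seg[OF S(1), of k "length S - 1" K] kl inK by auto
    ultimately show "S!k \<in> ?K" using x y inK kl by auto
  qed
  then have "reach R ?K (S!0) (S!(length S - 1))" using seg[OF S(1), of 0 "length S - 1" ?K] ne by auto
  then show ?thesis using x y by simp
qed

lemma subpath:
  assumes "is_path R S" "distinct S" "i \<le> j" "j < length S"
  defines "T \<equiv> take (Suc j - i) (drop i S)"
  shows "is_path R T \<and> distinct T \<and> hd T = S!i \<and> last T = S!j \<and>
    (\<forall>p. i \<le> p \<and> p \<le> j \<longrightarrow> S!p \<in> set T) \<and> set T \<subseteq> set S"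
proof (intro conjI)
  show "is_path R T" unfolding T_def
    using assms by (intro is_path_take is_path_drop) auto
  show "distinct T" unfolding T_def using assms by simp
  have lT: "length T = Suc j - i" unfolding T_def using assms by simp
  have nth: "\<And>k. k < Suc j - i \<Longrightarrow> T!k = S!(i+k)" unfolding T_def using assms by simp
  have ne: "T \<noteq> []" using lT assms by auto
  show "hd T = S!i" using nth[of 0] ne assms by (simp add: hd_conv_nth)
  show "last T = S!j" using nth[of "j - i"] ne assms lT by (simp add: last_conv_nth)
  show "\<forall>p. i \<le> p \<and> p \<le> j \<longrightarrow> S!p \<in> set T"
  proof (intro allI impI)
    fix p assume "i \<le> p \<and> p \<le> j"
    then have "T!(p-i) = S!p" "p - i < length T" using nth[of "p-i"] lT by auto
    then show "S!p \<in> set T" by (metis nth_mem)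
  qed
  show "set T \<subseteq> set S" unfolding T_def by (meson order_trans set_drop_subset set_take_subset)
qed




locale LS =
  fixes V :: "'a set" and E :: "('a \<times> 'a) set" and inp :: "nat \<Rightarrow> 'a"
    and n :: nat and out a b :: 'a
  assumes core: "core_network V E inp n out"
    and ssa: "abs_super_simple E inp n out a"
    and ssb: "abs_super_simple E inp n out b"
    and bef: "abs_before E inp n out a b"
begin

definition Mid where "Mid = {v. \<exists>Q. io_simple_path E a b Q \<and> v \<in> set Q}"

lemma EV: "E \<subseteq> V \<times> V" using core by (simp add: core_network_def)
lemma inpV: "m \<in> {1..n} \<Longrightarrow> inp m \<in> V" using core by (auto simp: core_network_def)
lemma n1: "1 \<in> {1..n}" using core by (simp add: core_network_def)

lemma exS: "m \<in> {1..n} \<Longrightarrow> \<exists>S. io_simple_path E (inp m) out S"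
proof -
  assume m: "m \<in> {1..n}"
  then have "downstream E (inp m) out" using core inpV by (auto simp: core_network_def)
  then have "reach E UNIV (inp m) out" by (simp add: downstream_reach)
  then show ?thesis using dpath by (metis io_simple_path_def)
qed

lemma idx: "m \<in> {1..n} \<Longrightarrow> io_simple_path E (inp m) out S \<Longrightarrow>
   \<exists>i j. i < j \<and> j < length S \<and> S!i = a \<and> S!j = b"
  using bef by (auto simp: abs_before_def)

lemma uniq: "io_simple_path E x y S \<Longrightarrow> i < length S \<Longrightarrow> j < length S \<Longrightarrow> S!i = S!j \<Longrightarrow> i = j"
  by (auto simp: io_simple_path_def nth_eq_iff_index_eq)

lemma hd0: "io_simple_path E x y S \<Longrightarrow> S!0 = x"
  by (auto simp: io_simple_path_def is_path_def hd_conv_nth)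
lemma lastn: "io_simple_path E x y S \<Longrightarrow> S!(length S - 1) = y"
  by (auto simp: io_simple_path_def is_path_def last_conv_nth)

lemma ab: "a \<noteq> b"
proof -
  obtain S where S: "io_simple_path E (inp 1) out S" using exS n1 by blast
  then obtain i j where "i < j \<and> j < length S \<and> S!i = a \<and> S!j = b" using idx n1 by blast
  then show ?thesis using uniq[OF S, of i j] by auto
qed

lemma cut_a: "m \<in> {1..n} \<Longrightarrow> \<not> reach E (-{a}) (inp m) out"
proof
  assume m: "m \<in> {1..n}" and r: "reach E (-{a}) (inp m) out"
  then obtain S where "is_path E S \<and> distinct S \<and> hd S = inp m \<and> last S = out \<and> set S \<subseteq> -{a}"
    using dpath by metis
  then show False using ssa m by (auto simp: abs_super_simple_def io_simple_path_def)
qed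

lemma cut_b: "m \<in> {1..n} \<Longrightarrow> \<not> reach E (-{b}) (inp m) out"
proof
  assume m: "m \<in> {1..n}" and r: "reach E (-{b}) (inp m) out"
  then obtain S where "is_path E S \<and> distinct S \<and> hd S = inp m \<and> last S = out \<and> set S \<subseteq> -{b}"
    using dpath by metis
  then show False using ssb m by (auto simp: abs_super_simple_def io_simple_path_def)
qed

lemma segS: "io_simple_path E x y S \<Longrightarrow> p \<le> q \<Longrightarrow> q < length S \<Longrightarrow> (\<forall>k. p \<le> k \<and> k \<le> q \<longrightarrow> S!k \<in> K)
  \<Longrightarrow> reach E K (S!p) (S!q)"
  using seg by (auto simp: io_simple_path_def)

lemma segA: "io_simple_path E x y S \<Longrightarrow> p \<le> q \<Longrightarrow> q < length S \<Longrightarrow> c < length S \<Longrightarrow>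
   (c < p \<or> q < c) \<Longrightarrow> reach E (-{S!c}) (S!p) (S!q)"
proof -
  assume S: "io_simple_path E x y S" and pq: "p \<le> q" "q < length S" "c < length S" "c < p \<or> q < c"
  have "\<forall>k. p \<le> k \<and> k \<le> q \<longrightarrow> S!k \<in> -{S!c}"
  proof (intro allI impI)
    fix k assume "p \<le> k \<and> k \<le> q"
    then show "S!k \<in> -{S!c}" using uniq[OF S, of k c] pq by auto
  qed
  then show ?thesis using segS[OF S pq(1,2)] by blast
qed

lemma F1: "m \<in> {1..n} \<Longrightarrow> reach E (-{b}) (inp m) a"
proof -
  assume m: "m \<in> {1..n}"
  obtain S where S: "io_simple_path E (inp m) out S" using exS m by blast
  then obtain i j where ij: "i < j \<and> j < length S \<and> S!i = a \<and> S!j = b" using idx m by blast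
  then have "reach E (-{S!j}) (S!0) (S!i)" using segA[OF S, of 0 i j] by auto
  then show ?thesis using ij hd0[OF S] by simp
qed

lemma F2: "reach E (-{a}) b out"
proof -
  obtain S where S: "io_simple_path E (inp 1) out S" using exS n1 by blast
  then obtain i j where ij: "i < j \<and> j < length S \<and> S!i = a \<and> S!j = b" using idx n1 by blast
  then have "reach E (-{S!i}) (S!j) (S!(length S - 1))" using segA[OF S, of j "length S - 1" i] by auto
  then show ?thesis using ij lastn[OF S] by simp
qed

lemma Mid_a: "u \<in> Mid \<Longrightarrow> u \<noteq> a \<Longrightarrow> reach E (-{a}) u b"
proof -
  assume u: "u \<in> Mid" "u \<noteq> a"
  then obtain Q where Q: "io_simple_path E a b Q" "u \<in> set Q" by (auto simp: Mid_def)
  then obtain p where p: "p < length Q" "Q!p = u" by (auto simp: in_set_conv_nth)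
  have "p \<noteq> 0" by (metis hd0[OF Q(1)] p(2) u(2))
  then have "reach E (-{Q!0}) (Q!p) (Q!(length Q - 1))" using segA[OF Q(1), of p "length Q - 1" 0] p by (simp, fastforce)
  then show ?thesis using p hd0[OF Q(1)] lastn[OF Q(1)] by simp
qed

lemma Mid_b: "u \<in> Mid \<Longrightarrow> u \<noteq> b \<Longrightarrow> reach E (-{b}) a u"
proof -
  assume u: "u \<in> Mid" "u \<noteq> b"
  then obtain Q where Q: "io_simple_path E a b Q" "u \<in> set Q" by (auto simp: Mid_def)
  then obtain p where p: "p < length Q" "Q!p = u" by (auto simp: in_set_conv_nth)
  have "p \<noteq> length Q - 1" using p u lastn[OF Q(1)] by auto
  then have "reach E (-{Q!(length Q - 1)}) (Q!0) (Q!p)" using segA[OF Q(1), of 0 p "length Q - 1"] p by auto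
  then show ?thesis using p hd0[OF Q(1)] lastn[OF Q(1)] by simp
qed

lemma Mid_reach: "u \<in> Mid \<Longrightarrow> reach E UNIV a u \<and> reach E UNIV u b"
proof -
  assume u: "u \<in> Mid"
  then obtain Q where Q: "io_simple_path E a b Q" "u \<in> set Q" by (auto simp: Mid_def)
  then obtain p where p: "p < length Q" "Q!p = u" by (auto simp: in_set_conv_nth)
  have "reach E UNIV (Q!0) (Q!p)" "reach E UNIV (Q!p) (Q!(length Q - 1))"
    using segS[OF Q(1), of 0 p UNIV] segS[OF Q(1), of p "length Q - 1" UNIV] p by auto
  then show ?thesis using p hd0[OF Q(1)] lastn[OF Q(1)] by simp
qed

end



context LS begin

lemma constr:
  assumes m: "m \<in> {1..n}" and S0: "io_simple_path E (inp m) out S0" and i: "i < length S0" "S0!i = a"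
    and m': "m' \<in> {1..n}" and S1: "io_simple_path E (inp m') out S1" and j: "j < length S1" "S1!j = b"
    and Q: "io_simple_path E a b Q"
  shows "io_simple_path E (inp m) out (take i S0 @ Q @ drop (Suc j) S1)"
    and "v \<in> set Q \<Longrightarrow> visits_in_order (take i S0 @ Q @ drop (Suc j) S1) a v b"
proof -
  let ?A = "take i S0" and ?R = "drop (Suc j) S1"
  have pS0: "is_path E S0" "distinct S0" using S0 by (auto simp: io_simple_path_def)
  have pS1: "is_path E S1" "distinct S1" using S1 by (auto simp: io_simple_path_def)
  have pQ: "is_path E Q" "distinct Q" "hd Q = a" "last Q = b" using Q by (auto simp: io_simple_path_def)
  have Qne: "Q \<noteq> []" using pQ by auto
  have QR: "is_path E (Q @ ?R)"
  proof (cases "Suc j = length S1")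
    case True then show ?thesis using pQ by simp
  next
    case False
    then have sj: "Suc j < length S1" using j by simp
    have "(S1!j, S1!Suc j) \<in> E" using pS1 sj by (auto simp: is_path_def)
    then show ?thesis using pQ j sj
      by (intro is_path_append is_path_drop pS1) (auto simp: hd_drop_conv_nth)
  qed
  have path: "is_path E (?A @ Q @ ?R)"
  proof (cases "i = 0")
    case True then show ?thesis using QR by simp
  next
    case False
    have "Suc (i-1) < length S0" using i False by simp
    then have "(S0!(i-1), S0!Suc (i-1)) \<in> E" using pS0 unfolding is_path_def by blast
    moreover have "last ?A = S0!(i-1)" using False i by (subst last_conv_nth) auto
    ultimately have "(last ?A, hd (Q @ ?R)) \<in> E" using False i pQ Qne by simp
    then show ?thesis using QR False is_path_append[OF is_path_take[OF pS0(1)] QR] by auto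
  qed
  have inA: "\<And>x. x \<in> set ?A \<Longrightarrow> \<exists>p. p < i \<and> S0!p = x"
    using i by (auto simp: in_set_conv_nth)
  have inR: "\<And>x. x \<in> set ?R \<Longrightarrow> \<exists>q. j < q \<and> q < length S1 \<and> S1!q = x"
  proof -
    fix x assume "x \<in> set ?R"
    then obtain k where "k < length ?R" "?R!k = x" by (auto simp: in_set_conv_nth)
    then show "\<exists>q. j < q \<and> q < length S1 \<and> S1!q = x" by (intro exI[of _ "Suc j + k"]) auto
  qed
  have d1: "set ?A \<inter> set Q = {}"
  proof (rule ccontr)
    assume "set ?A \<inter> set Q \<noteq> {}"
    then obtain x where x: "x \<in> set ?A" "x \<in> set Q" by blast
    then obtain p where p: "p < i" "S0!p = x" using inA by blast
    have xM: "x \<in> Mid" using x Q by (auto simp: Mid_def)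
    have "x \<noteq> a" using uniq[OF S0, of p i] p i by auto
    then have "reach E (-{a}) x b" using Mid_a xM by blast
    moreover have "reach E (-{a}) (inp m) x" using segA[OF S0, of 0 p i] p i hd0[OF S0] by auto
    ultimately show False using F2 cut_a m reach_trans by metis
  qed
  have d2: "set Q \<inter> set ?R = {}"
  proof (rule ccontr)
    assume "set Q \<inter> set ?R \<noteq> {}"
    then obtain x where x: "x \<in> set Q" "x \<in> set ?R" by blast
    then obtain q where q: "j < q" "q < length S1" "S1!q = x" using inR by blast
    have xM: "x \<in> Mid" using x Q by (auto simp: Mid_def)
    have "x \<noteq> b" using uniq[OF S1, of q j] q j by auto
    then have "reach E (-{b}) a x" using Mid_b xM by blast
    moreover have "reach E (-{b}) x out"
      using segA[OF S1, of q "length S1 - 1" j] q j lastn[OF S1] by auto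
    ultimately show False using F1 cut_b m reach_trans by metis
  qed
  have d3: "set ?A \<inter> set ?R = {}"
  proof (rule ccontr)
    assume "set ?A \<inter> set ?R \<noteq> {}"
    then obtain x where x: "x \<in> set ?A" "x \<in> set ?R" by blast
    then obtain q where q: "j < q" "q < length S1" "S1!q = x" using inR by blast
    obtain p where p: "p < i" "S0!p = x" using inA x by blast
    obtain i1 j1 where ij1: "i1 < j1" "j1 < length S1" "S1!i1 = a" "S1!j1 = b" using idx[OF m' S1] by blast
    have "j1 = j" using uniq[OF S1, of j1 j] ij1 j by auto
    have "reach E (-{a}) x out"
      using segA[OF S1, of q "length S1 - 1" i1] q ij1 \<open>j1 = j\<close> lastn[OF S1] by auto
    moreover have "reach E (-{a}) (inp m) x" using segA[OF S0, of 0 p i] p i hd0[OF S0] by auto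
    ultimately show False using cut_a m reach_trans by metis
  qed
  have dist: "distinct (?A @ Q @ ?R)" using d1 d2 d3 pS0 pS1 pQ by auto
  have hd: "hd (?A @ Q @ ?R) = inp m"
  proof (cases "i = 0")
    case True then show ?thesis using pQ Qne i hd0[OF S0] by simp
  next
    case False
    then have "?A \<noteq> []" using i by (cases S0) auto
    then have "hd (?A @ Q @ ?R) = hd ?A" by simp
    also have "\<dots> = ?A ! 0" using \<open>?A \<noteq> []\<close> by (simp add: hd_conv_nth)
    finally show ?thesis using i hd0[OF S0] False by simp
  qed
  have last: "last (?A @ Q @ ?R) = out"
  proof (cases "Suc j = length S1")
    case True then show ?thesis using pQ Qne j lastn[OF S1]
      by (metis append.right_neutral diff_Suc_1 drop_eq_Nil2 last_appendR order_refl)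
  next
    case False
    then have "?R \<noteq> []" using j by simp
    then show ?thesis using S1 by (simp add: io_simple_path_def)
  qed
  show "io_simple_path E (inp m) out (?A @ Q @ ?R)" using path dist hd last
    by (simp add: io_simple_path_def)
  assume "v \<in> set Q"
  then obtain p where p: "p < length Q" "Q!p = v" by (auto simp: in_set_conv_nth)
  have lA: "length ?A = i" using i by simp
  have nt: "\<And>k. k < length Q \<Longrightarrow> (?A @ Q @ ?R)!(i+k) = Q!k" using lA
    by (metis nth_append_length_plus nth_append)
  show "visits_in_order (?A @ Q @ ?R) a v b" unfolding visits_in_order_def
    apply (rule exI[of _ i], rule exI[of _ "i+p"], rule exI[of _ "i + (length Q - 1)"])
    using nt[of 0] nt[of p] nt[of "length Q - 1"] p Qne hd0[OF Q] lastn[OF Q] lA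
    by auto
qed

end



context LS begin

lemma reach_U: "reach E K x y \<Longrightarrow> reach E UNIV x y" by (erule reach_mono) simp

lemma Mid_iff: "m \<in> {1..n} \<Longrightarrow>
  (\<exists>S. io_simple_path E (inp m) out S \<and> visits_in_order S a v b) \<longleftrightarrow> v \<in> Mid"
proof
  assume m: "m \<in> {1..n}" and "\<exists>S. io_simple_path E (inp m) out S \<and> visits_in_order S a v b"
  then obtain S i j k where S: "io_simple_path E (inp m) out S" and
    ijk: "i \<le> j" "j \<le> k" "k < length S" "S!i = a" "S!j = v" "S!k = b"
    by (auto simp: visits_in_order_def)
  have pS: "is_path E S" "distinct S" using S by (auto simp: io_simple_path_def)
  have ik: "i \<le> k" using ijk by simp
  define T where "T = take (Suc k - i) (drop i S)"
  have T: "is_path E T \<and> distinct T \<and> hd T = S!i \<and> last T = S!k \<and>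
    (\<forall>p. i \<le> p \<and> p \<le> k \<longrightarrow> S!p \<in> set T) \<and> set T \<subseteq> set S"
    unfolding T_def using subpath[OF pS ik ijk(3)] by blast
  then have "io_simple_path E a b T" "v \<in> set T" using ijk by (auto simp: io_simple_path_def)
  then show "v \<in> Mid" unfolding Mid_def by blast
next
  assume m: "m \<in> {1..n}" and v: "v \<in> Mid"
  then obtain Q where Q: "io_simple_path E a b Q" "v \<in> set Q" by (auto simp: Mid_def)
  obtain S0 where S0: "io_simple_path E (inp m) out S0" using exS m by blast
  then obtain i j where ij: "i < j" "j < length S0" "S0!i = a" "S0!j = b" using idx m by blast
  have i0: "i < length S0" using ij by simp
  note c1 = constr(1)[OF m S0 i0 ij(3) m S0 ij(2) ij(4) Q(1)]
  note c2 = constr(2)[OF m S0 i0 ij(3) m S0 ij(2) ij(4) Q(1) Q(2)]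
  show "\<exists>S. io_simple_path E (inp m) out S \<and> visits_in_order S a v b"
    using c1 c2 by blast
qed

lemma Mid_simple: "m \<in> {1..n} \<Longrightarrow> v \<in> Mid \<Longrightarrow> simple_node E (inp m) out v"
proof -
  assume m: "m \<in> {1..n}" "v \<in> Mid"
  then obtain S where S: "io_simple_path E (inp m) out S" "visits_in_order S a v b"
    using Mid_iff by blast
  then have "v \<in> set S" by (auto simp: visits_in_order_def)
  then show ?thesis using S by (auto simp: simple_node_def)
qed

lemma Lm_eq: "m \<in> {1..n} \<Longrightarrow> Lm E (inp m) out a b = Mid"
proof (intro set_eqI iffI)
  fix v assume m: "m \<in> {1..n}" and "v \<in> Lm E (inp m) out a b"
  then show "v \<in> Mid" using Mid_iff[OF m] by (auto simp: Lm_def)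
next
  fix v assume m: "m \<in> {1..n}" and "v \<in> Mid"
  then show "v \<in> Lm E (inp m) out a b" using Mid_iff[OF m, of v] Mid_simple[OF m] by (auto simp: Lm_def)
qed

lemma Labs_eq: "Labs E inp n out a b = Mid"
proof (intro set_eqI iffI)
  fix v assume "v \<in> Labs E inp n out a b"
  then obtain m where "m \<in> {1..n}" "\<exists>S. io_simple_path E (inp m) out S \<and> visits_in_order S a v b"
    unfolding Labs_def by blast
  then show "v \<in> Mid" using Mid_iff by blast
next
  fix v assume v: "v \<in> Mid"
  have "abs_simple E inp n out v" unfolding abs_simple_def using Mid_simple v by blast
  moreover have "\<exists>S. io_simple_path E (inp 1) out S \<and> visits_in_order S a v b" using Mid_iff[OF n1] v by blast
  ultimately show "v \<in> Labs E inp n out a b" unfolding Labs_def using n1 by blast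
qed

definition G where "G m = Gm_nodes V E (inp m) out"

lemma G_char: "v \<in> G m \<longleftrightarrow> v \<in> V \<and> reach E UNIV (inp m) v \<and> reach E UNIV v out"
  by (simp add: G_def Gm_nodes_def downstream_reach)

lemma GV: "G m \<subseteq> V" using G_char by blast

lemma Mid_G: "m \<in> {1..n} \<Longrightarrow> Mid \<subseteq> G m"
proof
  fix u assume m: "m \<in> {1..n}" and u: "u \<in> Mid"
  have r1: "reach E UNIV (inp m) u"
    using reach_trans[OF reach_U[OF F1[OF m]]] Mid_reach[OF u] by blast
  have r2: "reach E UNIV u out"
    using reach_trans[OF _ reach_U[OF F2]] Mid_reach[OF u] by blast
  have "u \<in> V" using reach_tgt[OF reach_UNIV_V[OF EV inpV[OF m] r1]] .
  then show "u \<in> G m" using r1 r2 G_char by blast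
qed

lemma ans:
  assumes m'': "m'' \<in> {1..n}" and S: "io_simple_path E (inp m) out S" and m: "m \<in> {1..n}"
    and u: "u \<in> Mid" and r1: "reach E (-set S) v u" and r2: "reach E (-set S) u v"
    and vM: "v \<notin> Mid"
  shows "\<not> simple_node E (inp m'') out v"
proof
  assume "simple_node E (inp m'') out v"
  then obtain S'' where S'': "io_simple_path E (inp m'') out S''" "v \<in> set S''"
    by (auto simp: simple_node_def)
  then obtain p where p: "p < length S''" "S''!p = v" by (auto simp: in_set_conv_nth)
  obtain i j where ij: "i < j" "j < length S''" "S''!i = a" "S''!j = b" using idx m'' S'' by blast
  have abS: "a \<in> set S" "b \<in> set S" using ssa ssb S m by (auto simp: abs_super_simple_def)
  have uS: "u \<notin> set S" using reach_tgt[OF r1] by simp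
  have ua: "u \<noteq> a" "u \<noteq> b" using uS abS by auto
  have subA: "-set S \<subseteq> -{a}" "-set S \<subseteq> -{b}" using abS by auto
  show False
  proof (cases "p < i")
    case True
    have "reach E (-{a}) (inp m'') v" using segA[OF S''(1), of 0 p i] True p ij hd0[OF S''(1)] by auto
    moreover have "reach E (-{a}) v u" using reach_mono[OF r1 subA(1)] .
    moreover have "reach E (-{a}) u b" using Mid_a u ua by blast
    ultimately show False using F2 cut_a m'' reach_trans by metis
  next
    case False
    show False
    proof (cases "j < p")
      case True
      have "reach E (-{b}) v out"
        using segA[OF S''(1), of p "length S'' - 1" j] True p ij lastn[OF S''(1)] by auto
      moreover have "reach E (-{b}) u v" using reach_mono[OF r2 subA(2)] .
      moreover have "reach E (-{b}) a u" using Mid_b u ua by blast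
      ultimately show False using F1 cut_b m'' reach_trans by metis
    next
      case False2: False
      have pS: "is_path E S''" "distinct S''" using S'' by (auto simp: io_simple_path_def)
      note T = subpath[OF pS, of i j]
      have "v \<in> Mid" unfolding Mid_def io_simple_path_def
        using T ij p False False2 by (intro CollectI exI[of _ "take (Suc j - i) (drop i S'')"]) auto
      then show False using vM by blast
    qed
  qed
qed

definition A1 where "A1 m = {v. appendage_node E (inp m) out v \<and> (\<exists>S. io_simple_path E (inp m) out S \<and>
   (\<exists>u\<in>Mid. reach E (G m - set S) v u \<and> reach E (G m - set S) u v))}"
definition A2 where "A2 = {v. abs_appendage E inp n out v \<and> (\<exists>m'\<in>{1..n}. \<exists>S. io_simple_path E (inp m') out S \<and>
   (\<exists>u\<in>Mid. reach E (V - set S) v u \<and> reach E (V - set S) u v))}"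

lemma A12: "m \<in> {1..n} \<Longrightarrow> A1 m \<subseteq> A2"
proof
  fix v assume m: "m \<in> {1..n}" and "v \<in> A1 m"
  then obtain S u where app: "appendage_node E (inp m) out v" and S: "io_simple_path E (inp m) out S"
    and u: "u \<in> Mid" and r1: "reach E (G m - set S) v u" and r2: "reach E (G m - set S) u v"
    by (auto simp: A1_def)
  have vM: "v \<notin> Mid" using app Mid_simple m by (auto simp: appendage_node_def)
  have s1: "G m - set S \<subseteq> V - set S" "G m - set S \<subseteq> - set S" using GV by auto
  have "abs_appendage E inp n out v" unfolding abs_appendage_def appendage_node_def
  proof (intro ballI conjI)
    fix m'' assume m'': "m'' \<in> {1..n}"
    have "reach E UNIV (inp m'') v"
      using reach_trans[OF reach_trans[OF reach_U[OF F1[OF m'']]] reach_U[OF r2]] Mid_reach[OF u] by blast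
    then show "downstream E (inp m'') v" by (simp add: downstream_reach)
    show "\<not> simple_node E (inp m'') out v"
      using ans[OF m'' S m u reach_mono[OF r1 s1(2)] reach_mono[OF r2 s1(2)] vM] .
  qed
  then show "v \<in> A2" unfolding A2_def using m S u reach_mono[OF r1 s1(1)] reach_mono[OF r2 s1(1)] by blast
qed

lemma A21: "m \<in> {1..n} \<Longrightarrow> A2 \<subseteq> A1 m"
proof
  fix v assume m: "m \<in> {1..n}" and "v \<in> A2"
  then obtain m' S' u where aa: "abs_appendage E inp n out v" and m': "m' \<in> {1..n}"
    and S': "io_simple_path E (inp m') out S'"
    and u: "u \<in> Mid" and r1: "reach E (V - set S') v u" and r2: "reach E (V - set S') u v"
    by (auto simp: A2_def)
  have app: "appendage_node E (inp m) out v" using aa m by (simp add: abs_appendage_def)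
  obtain S0 where S0: "io_simple_path E (inp m) out S0" using exS m by blast
  then obtain i0 j0 where ij0: "i0 < j0" "j0 < length S0" "S0!i0 = a" "S0!j0 = b" using idx m by blast
  obtain i' j' where ij': "i' < j'" "j' < length S'" "S'!i' = a" "S'!j' = b" using idx m' S' by blast
  have pS': "is_path E S'" "distinct S'" using S' by (auto simp: io_simple_path_def)
  note T = subpath[OF pS', of i' j']
  define Q where "Q = take (Suc j' - i') (drop i' S')"
  have Q: "io_simple_path E a b Q" "set Q \<subseteq> set S'" using T ij' unfolding Q_def io_simple_path_def by auto
  define S where "S = take i0 S0 @ Q @ drop (Suc j') S'"
  have S: "io_simple_path E (inp m) out S" unfolding S_def
    using constr(1)[OF m S0 _ ij0(3) m' S' ij'(2) ij'(4) Q(1)] ij0 by simp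
  have setS: "set S \<subseteq> set (take i0 S0) \<union> set S'" unfolding S_def using Q(2)
    by (auto dest: in_set_dropD)
  have aS': "a \<in> set S'" using ssa S' m' by (auto simp: abs_super_simple_def)
  have uV: "u \<in> V - set S'" using reach_tgt[OF r1] .
  have W: "\<And>w. w \<in> V - set S' \<Longrightarrow> reach E (V - set S') w u \<Longrightarrow> reach E (V - set S') u w \<Longrightarrow> w \<in> G m - set S"
  proof -
    fix w assume w: "w \<in> V - set S'" and wu: "reach E (V - set S') w u" and uw: "reach E (V - set S') u w"
    have "reach E UNIV (inp m) w"
      using reach_trans[OF reach_trans[OF reach_U[OF F1[OF m]]] reach_U[OF uw]] Mid_reach[OF u] by blast
    moreover have "reach E UNIV w out"
      using reach_trans[OF reach_U[OF wu] reach_trans[OF _ reach_U[OF F2]]] Mid_reach[OF u] by blast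
    ultimately have wG: "w \<in> G m" using w G_char by blast
    have "w \<notin> set (take i0 S0)"
    proof
      assume "w \<in> set (take i0 S0)"
      then obtain p where p: "p < i0" "S0!p = w" using ij0 by (auto simp: in_set_conv_nth)
      have "reach E (-{a}) (inp m) w" using segA[OF S0, of 0 p i0] p ij0 hd0[OF S0] by auto
      moreover have "reach E (-{a}) w u" using reach_mono[OF wu, of "-{a}"] aS' by blast
      moreover have "reach E (-{a}) u b" using Mid_a u uV aS' by blast
      ultimately show False using F2 cut_a m reach_trans by metis
    qed
    then show "w \<in> G m - set S" using wG w setS by blast
  qed
  have k1: "{w\<in>V - set S'. reach E (V - set S') v w \<and> reach E (V - set S') w u} \<subseteq> G m - set S"
  proof
    fix w assume "w \<in> {w\<in>V - set S'. reach E (V - set S') v w \<and> reach E (V - set S') w u}"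
    then have "w \<in> V - set S'" "reach E (V - set S') v w" "reach E (V - set S') w u" by auto
    then show "w \<in> G m - set S" using W reach_trans[OF r2 \<open>reach E (V - set S') v w\<close>] by blast
  qed
  have k2: "{w\<in>V - set S'. reach E (V - set S') u w \<and> reach E (V - set S') w v} \<subseteq> G m - set S"
  proof
    fix w assume "w \<in> {w\<in>V - set S'. reach E (V - set S') u w \<and> reach E (V - set S') w v}"
    then have "w \<in> V - set S'" "reach E (V - set S') u w" "reach E (V - set S') w v" by auto
    then show "w \<in> G m - set S" using W reach_trans[OF \<open>reach E (V - set S') w v\<close> r1] by blast
  qed
  have "reach E (G m - set S) v u" using reach_mono[OF restrict[OF r1] k1] .
  moreover have "reach E (G m - set S) u v" using reach_mono[OF restrict[OF r2] k2] .
  ultimately show "v \<in> A1 m" unfolding A1_def using app S u by blast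
qed

lemma main: "m \<in> {1..n} \<Longrightarrow> Lm' V E (inp m) out a b = Labs' V E inp n out a b"
proof -
  assume m: "m \<in> {1..n}"
  have sub: "\<And>X. Gm_nodes V E (inp m) out - X \<subseteq> Gm_nodes V E (inp m) out" by blast
  have N1: "{v. appendage_node E (inp m) out v \<and> (\<exists>S. io_simple_path E (inp m) out S \<and>
      (\<exists>u\<in>Mid. path_equiv (E \<inter> (Gm_nodes V E (inp m) out \<times> Gm_nodes V E (inp m) out))
         (Gm_nodes V E (inp m) out - set S) v u))} = A1 m"
    unfolding A1_def path_equiv_iff reach_restrictG[OF sub] G_def by (rule refl)
  have N2: "{v. abs_appendage E inp n out v \<and> (\<exists>m\<in>{1..n}. \<exists>S. io_simple_path E (inp m) out S \<and>
      (\<exists>u\<in>Mid. path_equiv E (V - set S) v u))} = A2"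
    unfolding A2_def path_equiv_iff by (rule refl)
  have L: "Lm' V E (inp m) out a b = (Mid \<union> A1 m, {(x, y). (x, y) \<in> E \<and> x \<in> Mid \<union> A1 m \<and> y \<in> Mid \<union> A1 m
      \<and> x \<in> G m \<and> y \<in> G m})"
    unfolding Lm'_def Let_def Lm_eq[OF m] N1 G_def by (rule refl)
  have R: "Labs' V E inp n out a b = (Mid \<union> A2, {(x, y). (x, y) \<in> E \<and> x \<in> Mid \<union> A2 \<and> y \<in> Mid \<union> A2})"
    unfolding Labs'_def Let_def Labs_eq N2 by (rule refl)
  have A: "A1 m = A2" using A12 A21 m by blast
  have A1G: "A1 m \<subseteq> G m"
  proof
    fix v assume "v \<in> A1 m"
    then obtain S u where "reach E (G m - set S) v u" unfolding A1_def by blast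
    then show "v \<in> G m" by (blast dest: reach_src)
  qed
  have NG: "Mid \<union> A2 \<subseteq> G m" using A A1G Mid_G[OF m] by blast
  have "{(x, y). (x, y) \<in> E \<and> x \<in> Mid \<union> A2 \<and> y \<in> Mid \<union> A2 \<and> x \<in> G m \<and> y \<in> G m} =
        {(x, y). (x, y) \<in> E \<and> x \<in> Mid \<union> A2 \<and> y \<in> Mid \<union> A2}" using NG by blast
  then show ?thesis unfolding L R A by (simp only: )
qed

end

theorem lemma3p23:
  fixes V :: "'a set" and E :: "('a \<times> 'a) set" and inp :: "nat \<Rightarrow> 'a"
    and n :: nat and out a b :: 'a
  assumes "core_network V E inp n out"
    and "abs_adjacent E inp n out a b"
  shows "\<forall>m\<in>{1..n}. Lm' V E (inp m) out a b = Labs' V E inp n out a b"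
proof -
  interpret LS V E inp n out a b
  proof
    show "core_network V E inp n out" using assms(1) .
    show "abs_super_simple E inp n out a" using assms(2) unfolding abs_adjacent_def by (elim conjE)
    show "abs_super_simple E inp n out b" using assms(2) unfolding abs_adjacent_def by (elim conjE)
    show "abs_before E inp n out a b" using assms(2) unfolding abs_adjacent_def by (elim conjE)
  qed
  show ?thesis using main by (intro ballI)
qed


end
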